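(* Let $\mathcal M$ be a type $\mathrm{I}_n$ factor ($n\in\mathbb N$), i.e. $\mathcal M\cong M_n(\mathbb C)$, with the trace $\tau$ satisfying $\tau(I)=n$. If $A\in\mathcal M^+$ satisfies $\tau(A)\in\mathbb N\cup\{0\}$ and $\tau(A)\geq\tau(R_A)$, then $A$ is a sum of finitely many projections.
   Context: $R_A$ denotes the range projection of $A$. *)

theory Defs
  imports "HOL-Analysis.Analysis"
begin

text \<open>M_n(C) is modelled as complex^'n^'n for a finite index type 'n (n = CARD('n));
  the trace is the library's unnormalised trace, so trace (mat 1) = n.\<close>

definition cadjoint :: "complex^'n^'n \<Rightarrow> complex^'n^'n" where
  "cadjoint A = (\<chi> i j. cnj (A $ j $ i))"

definition cinner :: "complex^'n \<Rightarrow> complex^'n \<Rightarrow> complex" where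
  "cinner x y = (\<Sum>i\<in>UNIV. cnj (x $ i) * y $ i)"

definition positive_op :: "complex^'n^'n \<Rightarrow> bool" where
  "positive_op A \<longleftrightarrow> cadjoint A = A \<and> (\<forall>x. Im (cinner x (A *v x)) = 0 \<and> 0 \<le> Re (cinner x (A *v x)))"

definition is_projection :: "complex^'n^'n \<Rightarrow> bool" where
  "is_projection P \<longleftrightarrow> P ** P = P \<and> cadjoint P = P"

definition range_projection :: "complex^'n^'n \<Rightarrow> complex^'n^'n" where
  "range_projection A = (THE P. is_projection P \<and> range ((*v) P) = range ((*v) A))"

end

theory Submission
  imports Defs
begin


definition outer2 :: "complex^'n \<Rightarrow> complex^'n \<Rightarrow> complex^'n^'n" where
  "outer2 a b = (\<chi> i j. a $ i * cnj (b $ j))"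

definition nsq :: "complex^'n \<Rightarrow> real" where
  "nsq x = Re (cinner x x)"

lemma cinner_self: "cinner x x = of_real (nsq x)"
  unfolding nsq_def cinner_def
  by (simp add: complex_eq_iff Im_sum mult.commute)

lemma nsq_nonneg: "0 \<le> nsq x"
  unfolding nsq_def cinner_def by (simp add: Re_sum sum_nonneg)

lemma nsq_eq_0: "nsq x = 0 \<longleftrightarrow> x = 0"
proof
  assume "nsq x = 0"
  hence "(\<Sum>i\<in>UNIV. Re (x$i) * Re (x$i) + Im (x$i) * Im (x$i)) = 0"
    unfolding nsq_def cinner_def by (simp add: Re_sum)
  hence "\<forall>i. Re (x$i) * Re (x$i) + Im (x$i) * Im (x$i) = 0"
    by (simp add: sum_nonneg_eq_0_iff)
  thus "x = 0" by (simp add: vec_eq_iff complex_eq_iff sum_squares_eq_zero_iff)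
qed (simp add: nsq_def cinner_def)

lemma nsq_pos: "x \<noteq> 0 \<Longrightarrow> 0 < nsq x"
  using nsq_nonneg nsq_eq_0 by (metis less_eq_real_def)

lemma cinner_add_left: "cinner (x + y) z = cinner x z + cinner y z"
  unfolding cinner_def by (simp add: distrib_right sum.distrib)
lemma cinner_add_right: "cinner z (x + y) = cinner z x + cinner z y"
  unfolding cinner_def by (simp add: distrib_left sum.distrib)
lemma cinner_diff_left: "cinner (x - y) z = cinner x z - cinner y z"
  unfolding cinner_def by (simp add: left_diff_distrib sum_subtractf)
lemma cinner_diff_right: "cinner z (x - y) = cinner z x - cinner z y"
  unfolding cinner_def by (simp add: right_diff_distrib sum_subtractf)
lemma cinner_scale_left: "cinner (c *s x) z = cnj c * cinner x z"
  unfolding cinner_def by (simp add: sum_distrib_left mult.assoc)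
lemma cinner_scale_right: "cinner z (c *s x) = c * cinner z x"
  unfolding cinner_def by (simp add: sum_distrib_left mult.left_commute)
lemma cinner_sum_right: "cinner z (sum f S) = (\<Sum>s\<in>S. cinner z (f s))"
  unfolding cinner_def by (simp add: sum_distrib_left sum_component sum.swap[of _ S])
lemma cinner_sum_left: "cinner (sum f S) z = (\<Sum>s\<in>S. cinner (f s) z)"
  unfolding cinner_def by (simp add: sum_distrib_right sum_component sum.swap[of _ S])
lemma cinner_commute: "cinner y x = cnj (cinner x y)"
  unfolding cinner_def by (simp add: mult.commute)
lemma cinner_zero_left[simp]: "cinner 0 x = 0" unfolding cinner_def by simp
lemma cinner_zero_right[simp]: "cinner x 0 = 0" unfolding cinner_def by simp

lemma outer2_mult_vec: "outer2 a b *v y = cinner b y *s a"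
  unfolding outer2_def cinner_def matrix_vector_mult_def
  by (simp add: vec_eq_iff sum_distrib_left mult.assoc mult.commute mult.left_commute)

lemma sum_mult_vec: "(sum f S) *v y = (\<Sum>s\<in>S. f s *v y)"
  by (induction S rule: infinite_finite_induct) (auto simp: matrix_vector_mult_add_rdistrib)

lemma cadjoint_outer2: "cadjoint (outer2 a b) = outer2 b a"
  unfolding cadjoint_def outer2_def by (simp add: vec_eq_iff mult.commute)

lemma cadjoint_add: "cadjoint (A + B) = cadjoint A + cadjoint B"
  unfolding cadjoint_def by (simp add: vec_eq_iff)
lemma cadjoint_diff: "cadjoint (A - B) = cadjoint A - cadjoint B"
  unfolding cadjoint_def by (simp add: vec_eq_iff)
lemma cadjoint_zero: "cadjoint 0 = 0"
  unfolding cadjoint_def by (simp add: vec_eq_iff)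
lemma cadjoint_sum: "cadjoint (sum f S) = (\<Sum>s\<in>S. cadjoint (f s))"
  by (induction S rule: infinite_finite_induct) (auto simp: cadjoint_add cadjoint_zero)
lemma cadjoint_mat: "cadjoint (mat c) = mat (cnj c)"
  unfolding cadjoint_def mat_def by (simp add: vec_eq_iff)
lemma cadjoint_mult: "cadjoint (A ** B) = cadjoint B ** cadjoint A"
  unfolding cadjoint_def matrix_matrix_mult_def by (simp add: vec_eq_iff mult.commute)

lemma cinner_adjoint: "cinner (M *v y) z = cinner y (cadjoint M *v z)"
proof -
  have "cinner (M *v y) z = (\<Sum>i\<in>UNIV. \<Sum>j\<in>UNIV. cnj (M$i$j) * cnj (y$j) * z$i)"
    unfolding cinner_def matrix_vector_mult_def by (simp add: sum_distrib_right)
  also have "\<dots> = (\<Sum>j\<in>UNIV. \<Sum>i\<in>UNIV. cnj (M$i$j) * cnj (y$j) * z$i)"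
    by (rule sum.swap)
  also have "\<dots> = cinner y (cadjoint M *v z)"
    unfolding cinner_def cadjoint_def matrix_vector_mult_def by (simp add: sum_distrib_left mult_ac)
  finally show ?thesis .
qed

lemma trace_outer2: "trace (outer2 a b) = cinner b a"
  unfolding trace_def outer2_def cinner_def by (simp add: mult.commute)

lemma trace_sum: "trace (sum f S) = (\<Sum>s\<in>S. trace (f s))"
  unfolding trace_def by (simp add: sum_component sum.swap[of _ S])

lemma inner_cinner: "inner x y = Re (cinner x y)"
  unfolding inner_vec_def cinner_def by (simp add: Re_sum inner_complex_def)

abbreviation outer :: "complex^'n \<Rightarrow> complex^'n^'n" where "outer x \<equiv> outer2 x x"

definition orth :: "(complex^'n) set \<Rightarrow> bool" where
  "orth S \<longleftrightarrow> (\<forall>x\<in>S. \<forall>y\<in>S. x \<noteq> y \<longrightarrow> cinner x y = 0)"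

lemma outer2_zero[simp]: "outer2 0 0 = 0"
  unfolding outer2_def by (simp add: vec_eq_iff)

lemma rotation:
  fixes a b :: real
  assumes "a^2 + b^2 = 1"
  shows "outer (of_real a *s x + of_real b *s y) + outer (of_real b *s x - of_real a *s y)
         = outer x + outer y"
proof -
  have "\<And>i j. (of_real a * x$i + of_real b * y$i) * cnj (of_real a * x$j + of_real b * y$j)
     + (of_real b * x$i - of_real a * y$i) * cnj (of_real b * x$j - of_real a * y$j)
     = of_real (a^2+b^2) * (x$i * cnj (x$j) + y$i * cnj (y$j))"
    by (simp add: algebra_simps power2_eq_square)
  thus ?thesis using assms unfolding outer2_def by (simp add: vec_eq_iff)
qed

lemma nsq_comb:
  assumes "cinner x y = 0"
  shows "nsq (of_real a *s x + of_real b *s y) = a^2 * nsq x + b^2 * nsq y"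
proof -
  have yx: "cinner y x = 0" using assms cinner_commute[of x y] by simp
  have "cinner (of_real a *s x + of_real b *s y) (of_real a *s x + of_real b *s y)
     = of_real (a^2) * cinner x x + of_real (b^2) * cinner y y"
    by (simp add: cinner_add_left cinner_add_right cinner_scale_left cinner_scale_right assms yx power2_eq_square)
  thus ?thesis unfolding nsq_def by (simp add: cinner_self)
qed

lemma nsq_scale: "nsq (of_real a *s x) = a^2 * nsq x"
  using nsq_comb[of x 0 a 0] by simp

lemma outer_proj:
  assumes "nsq u = 1"
  shows "is_projection (outer u)"
  unfolding is_projection_def
proof
  show "outer u ** outer u = outer u"
    unfolding matrix_eq
    by (simp add: matrix_vector_mul_assoc[symmetric] outer2_mult_vec cinner_scale_right cinner_self assms)
  show "cadjoint (outer u) = outer u" by (simp add: cadjoint_outer2)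
qed

lemma orth_insert:
  assumes "orth T" "z \<noteq> 0" "\<forall>s\<in>T. cinner z s = 0"
  shows "orth (insert z T)" "z \<notin> T"
proof -
  show "z \<notin> T"
  proof
    assume "z \<in> T" then have "cinner z z = 0" using assms by auto
    thus False using assms(2) nsq_eq_0[of z] by (simp add: cinner_self)
  qed
  show "orth (insert z T)" using assms unfolding orth_def
    by (metis cinner_commute complex_cnj_zero insert_iff)
qed

lemma orth_subset: "orth S \<Longrightarrow> T \<subseteq> S \<Longrightarrow> orth T"
  unfolding orth_def by blast



lemma orth_cinner: "orth S \<Longrightarrow> x \<in> S \<Longrightarrow> y \<in> S \<Longrightarrow> x \<noteq> y \<Longrightarrow> cinner x y = 0"
  unfolding orth_def by blast

lemma comb:
  "finite S \<Longrightarrow> 0 \<notin> S \<Longrightarrow> orth S \<Longrightarrow> (\<Sum>x\<in>S. nsq x) = real m \<Longrightarrow> card S \<le> m \<Longrightarrow>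
   \<exists>Ps. (\<forall>P\<in>set Ps. is_projection P) \<and> (\<Sum>x\<in>S. outer x) = sum_list Ps"
proof (induction m arbitrary: S)
  case 0
  then have "S = {}" by simp
  thus ?case by (intro exI[of _ "[]"]) simp
next
  case (Suc m)
  have pos: "\<And>x. x \<in> S \<Longrightarrow> 0 < nsq x" using Suc.prems(2) nsq_pos by metis
  have ne: "S \<noteq> {}" using Suc.prems(4) by auto
  show ?case
  proof (cases "\<exists>x\<in>S. 1 \<le> nsq x \<and> (card S < Suc m \<or> nsq x = 1)")
    case True
    then obtain x where x: "x \<in> S" "1 \<le> nsq x" "card S < Suc m \<or> nsq x = 1" by blast
    define l where "l = nsq x"
    have sumS: "(\<Sum>z\<in>S. nsq z) = nsq x + (\<Sum>z\<in>S-{x}. nsq z)"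
      using Suc.prems(1) x(1) by (simp add: sum.remove)
    have outS: "(\<Sum>z\<in>S. outer z) = outer x + (\<Sum>z\<in>S-{x}. outer z)"
      using Suc.prems(1) x(1) by (simp add: sum.remove)
    show ?thesis
    proof (cases "nsq x = 1")
      case True
      have "\<exists>Ps. (\<forall>P\<in>set Ps. is_projection P) \<and> (\<Sum>z\<in>S-{x}. outer z) = sum_list Ps"
        apply (rule Suc.IH)
        using Suc.prems x True sumS orth_subset[of S "S-{x}"]
        by (auto simp: card_Diff_singleton)
      then obtain Ps where "\<forall>P\<in>set Ps. is_projection P" "(\<Sum>z\<in>S-{x}. outer z) = sum_list Ps" by blast
      thus ?thesis using outS outer_proj[OF True]
        by (intro exI[of _ "outer x # Ps"]) simp
    next
      case False
      then have l1: "1 < l" "card S \<le> m" using x l_def by auto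
      define a where "a = 1 / sqrt l"
      define b where "b = sqrt (1 - 1/l)"
      have a2: "a^2 = 1/l" unfolding a_def using l1 by (simp add: power_divide)
      have b2: "b^2 = 1 - 1/l" unfolding b_def using l1 by simp
      have ab: "a^2 + b^2 = 1" using a2 b2 by simp
      define u where "u = of_real a *s x"
      define t where "t = of_real b *s x"
      have rot: "outer u + outer t = outer x"
        using rotation[OF ab, of x 0] unfolding u_def t_def by simp
      have nu: "nsq u = 1" unfolding u_def nsq_scale a2 l_def using l1 l_def by simp
      have nt: "nsq t = l - 1" unfolding t_def nsq_scale b2 l_def using l1 l_def
        by (simp add: field_simps)
      have t0: "t \<noteq> 0" using nt l1 nsq_eq_0[of t] by auto
      have torth: "\<forall>s\<in>S-{x}. cinner t s = 0"
        unfolding t_def using orth_cinner[OF Suc.prems(3)] x(1)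
        by (auto simp: cinner_scale_left)
      have oT: "orth (S - {x})" using orth_subset Suc.prems(3) by blast
      note ins = orth_insert[OF oT t0 torth]
      have "\<exists>Ps. (\<forall>P\<in>set Ps. is_projection P) \<and> (\<Sum>z\<in>insert t (S-{x}). outer z) = sum_list Ps"
      proof (rule Suc.IH)
        show "finite (insert t (S - {x}))" using Suc.prems by simp
        show "0 \<notin> insert t (S - {x})" using Suc.prems t0 by auto
        show "orth (insert t (S - {x}))" by (rule ins(1))
        show "(\<Sum>z\<in>insert t (S - {x}). nsq z) = real m"
          using Suc.prems(1,4) ins(2) sumS nt l_def by simp
        show "card (insert t (S - {x})) \<le> m"
          using Suc.prems(1) ins(2) l1 x(1) ne card_gt_0_iff[of S] by (simp add: card_Diff_singleton)
      qed
      then obtain Ps where Ps: "\<forall>P\<in>set Ps. is_projection P"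
        "(\<Sum>z\<in>insert t (S-{x}). outer z) = sum_list Ps" by blast
      have "(\<Sum>z\<in>S. outer z) = outer u + (\<Sum>z\<in>insert t (S-{x}). outer z)"
        using outS rot Suc.prems(1) ins(2) by (simp add: add.assoc)
      thus ?thesis using Ps outer_proj[OF nu]
        by (intro exI[of _ "outer u # Ps"]) simp
    qed
  next
    case False
    have ex1: "\<exists>x\<in>S. 1 \<le> nsq x"
    proof (rule ccontr)
      assume "\<not> ?thesis"
      then have "(\<Sum>z\<in>S. nsq z) < (\<Sum>z\<in>S. 1)"
        using Suc.prems(1) ne by (intro sum_strict_mono) auto
      thus False using Suc.prems(4,5) by simp
    qed
    then obtain x where x: "x \<in> S" "1 \<le> nsq x" by blast
    have nA: "\<not> (1 \<le> nsq x \<and> (card S < Suc m \<or> nsq x = 1))" using False x(1) by blast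
    have cS: "card S = Suc m" using nA x(2) Suc.prems(5) by linarith
    have x1: "1 < nsq x" using nA x(2) Suc.prems(5) by linarith
    have ex2: "\<exists>y\<in>S. nsq y < 1"
    proof (rule ccontr)
      assume "\<not> ?thesis"
      then have "(\<Sum>z\<in>S. 1) < (\<Sum>z\<in>S. nsq z)"
        using Suc.prems(1) x x1 by (intro sum_strict_mono_ex1) auto
      thus False using Suc.prems(4) cS by simp
    qed
    then obtain y where y: "y \<in> S" "nsq y < 1" by blast
    have xy: "x \<noteq> y" using x1 y by auto
    define l where "l = nsq x"
    define mu where "mu = nsq y"
    have mu0: "0 < mu" using pos y(1) mu_def by simp
    have l1: "1 < l" "mu < 1" using x1 y l_def mu_def by auto
    define c where "c = (1 - mu) / (l - mu)"
    have c01: "0 < c" "c < 1" unfolding c_def using l1 by (auto simp: field_simps)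
    define a where "a = sqrt c"
    define b where "b = sqrt (1 - c)"
    have a2: "a^2 = c" unfolding a_def using c01 by simp
    have b2: "b^2 = 1 - c" unfolding b_def using c01 by simp
    have ab: "a^2 + b^2 = 1" using a2 b2 by simp
    define v where "v = of_real a *s x + of_real b *s y"
    define w where "w = of_real b *s x - of_real a *s y"
    have cxy: "cinner x y = 0" using orth_cinner[OF Suc.prems(3) x(1) y(1) xy] .
    have rot: "outer v + outer w = outer x + outer y"
      using rotation[OF ab, of x y] unfolding v_def w_def by simp
    have lm: "l - mu \<noteq> 0" using l1 by simp
    have nv: "nsq v = 1"
    proof -
      have "nsq v = a^2*l + b^2*mu" by (simp add: v_def nsq_comb[OF cxy] l_def mu_def)
      also have "\<dots> = mu + c*(l-mu)" unfolding a2 b2 by (simp add: algebra_simps)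
      also have "c*(l-mu) = 1 - mu" using lm by (simp add: c_def)
      finally show ?thesis by simp
    qed
    have w': "w = of_real b *s x + of_real (-a) *s y" unfolding w_def
      by (simp add: vec_eq_iff)
    have nw: "nsq w = l + mu - 1"
    proof -
      have "nsq w = b^2*l + (-a)^2*mu" unfolding w' nsq_comb[OF cxy] l_def mu_def by simp
      also have "\<dots> = l - c*(l-mu)" unfolding power2_minus a2 b2 by (simp add: algebra_simps)
      also have "c*(l-mu) = 1 - mu" using lm by (simp add: c_def)
      finally show ?thesis by simp
    qed
    have w0: "w \<noteq> 0" using nw l1 mu0 nsq_eq_0[of w] by auto
    define T where "T = S - {x, y}"
    have worth: "\<forall>s\<in>T. cinner w s = 0"
    proof
      fix s assume "s \<in> T"
      then have s: "s \<in> S" "x \<noteq> s" "y \<noteq> s" by (auto simp: T_def)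
      show "cinner w s = 0"
        using orth_cinner[OF Suc.prems(3) x(1) s(1) s(2)] orth_cinner[OF Suc.prems(3) y(1) s(1) s(3)]
        by (simp add: w_def cinner_diff_left cinner_scale_left)
    qed
    have oT: "orth T" unfolding T_def using orth_subset Suc.prems(3) by blast
    note ins = orth_insert[OF oT w0 worth]
    have fT: "finite T" using Suc.prems(1) T_def by simp
    have Sdec: "S = insert x (insert y T)" "x \<notin> insert y T" "y \<notin> T"
      unfolding T_def using x(1) y(1) xy by auto
    have sumS: "(\<Sum>z\<in>S. nsq z) = nsq x + nsq y + (\<Sum>z\<in>T. nsq z)"
      using fT Sdec by (simp add: add.assoc)
    have outS: "(\<Sum>z\<in>S. outer z) = outer x + outer y + (\<Sum>z\<in>T. outer z)"
      using fT Sdec by (simp add: add.assoc)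
    have cardT: "card S = Suc (Suc (card T))" using fT Sdec by simp
    have "\<exists>Ps. (\<forall>P\<in>set Ps. is_projection P) \<and> (\<Sum>z\<in>insert w T. outer z) = sum_list Ps"
    proof (rule Suc.IH)
      show "finite (insert w T)" using fT by simp
      show "0 \<notin> insert w T" using Suc.prems(2) w0 T_def by auto
      show "orth (insert w T)" by (rule ins(1))
      show "(\<Sum>z\<in>insert w T. nsq z) = real m"
        using Suc.prems(4) ins(2) sumS nw l_def mu_def fT by simp
      show "card (insert w T) \<le> m"
        using cS cardT ins(2) fT by simp
    qed
    then obtain Ps where Ps: "\<forall>P\<in>set Ps. is_projection P"
      "(\<Sum>z\<in>insert w T. outer z) = sum_list Ps" by blast
    have "(\<Sum>z\<in>S. outer z) = outer v + (\<Sum>z\<in>insert w T. outer z)"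
      using outS rot fT ins(2) by (simp add: add.assoc)
    thus ?thesis using Ps outer_proj[OF nv]
      by (intro exI[of _ "outer v # Ps"]) simp
  qed
qed



lemma mv_scale: "M *v (c *s y) = c *s (M *v (y::complex^'n))"
  unfolding matrix_vector_mult_def by (simp add: vec_eq_iff sum_distrib_left mult.left_commute)

lemma mv_sum: "M *v (sum f S) = (\<Sum>s\<in>S. M *v f s)"
  by (induction S rule: infinite_finite_induct) (auto simp: matrix_vector_right_distrib)

lemma mv_mat: "mat c *v y = c *s (y::complex^'n)"
  unfolding matrix_vector_mult_def mat_def by (simp add: vec_eq_iff if_distrib if_distribR cong: if_cong)

lemma mv_diff_left: "(A - B) *v y = A *v y - B *v (y::complex^'n)"
  unfolding matrix_vector_mult_def by (simp add: vec_eq_iff sum_subtractf left_diff_distrib)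

lemma mv_diff_right: "A *v (x - y) = A *v x - A *v (y::complex^'n)"
  unfolding matrix_vector_mult_def by (simp add: vec_eq_iff sum_subtractf right_diff_distrib)

lemma scale_sum: "c *s sum f S = (\<Sum>s\<in>S. c *s (f s::complex^'n))"
  by (induction S rule: infinite_finite_induct) (auto simp: vector_ssub_ldistrib vec_eq_iff distrib_left)

lemma orth_pick:
  assumes "finite S" "orth S" "s \<in> S"
  shows "(\<Sum>x\<in>S. g x * cinner s x) = g s * cinner s s"
proof -
  have "(\<Sum>x\<in>S. g x * cinner s x) = g s * cinner s s + (\<Sum>x\<in>S-{s}. g x * cinner s x)"
    using assms by (simp add: sum.remove)
  also have "(\<Sum>x\<in>S-{s}. g x * cinner s x) = 0"
    using assms by (intro sum.neutral) (auto simp: orth_def)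
  finally show ?thesis by simp
qed

definition MS :: "(complex^'n) set \<Rightarrow> (complex^'n \<Rightarrow> real) \<Rightarrow> complex^'n^'n" where
  "MS S f = (\<Sum>x\<in>S. outer2 (of_real (f x) *s x) x)"

lemma MS_mv: "MS S f *v y = (\<Sum>x\<in>S. (of_real (f x) * cinner x y) *s x)"
  unfolding MS_def sum_mult_vec outer2_mult_vec
  by (simp add: vector_smult_assoc mult.commute)

lemma MS_comp:
  assumes "finite S" "orth S"
  shows "MS S f ** MS S g = MS S (\<lambda>x. f x * g x * nsq x)"
  unfolding matrix_eq
proof
  fix y
  have "(MS S f ** MS S g) *v y = MS S f *v (MS S g *v y)" by (simp add: matrix_vector_mul_assoc)
  also have "\<dots> = (\<Sum>x\<in>S. (of_real (f x) * (\<Sum>z\<in>S. (of_real (g z) * cinner z y) * cinner x z)) *s x)"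
    by (simp add: MS_mv cinner_sum_right cinner_scale_right)
  also have "\<dots> = (\<Sum>x\<in>S. (of_real (f x * g x * nsq x) * cinner x y) *s x)"
  proof (rule sum.cong[OF refl])
    fix x assume x: "x \<in> S"
    have "(\<Sum>z\<in>S. (of_real (g z) * cinner z y) * cinner x z) = (of_real (g x) * cinner x y) * cinner x x"
      by (rule orth_pick[OF assms x])
    thus "(of_real (f x) * (\<Sum>z\<in>S. (of_real (g z) * cinner z y) * cinner x z)) *s x =
          (of_real (f x * g x * nsq x) * cinner x y) *s x"
      by (simp add: cinner_self mult_ac)
  qed
  also have "\<dots> = MS S (\<lambda>x. f x * g x * nsq x) *v y" by (simp add: MS_mv)
  finally show "(MS S f ** MS S g) *v y = MS S (\<lambda>x. f x * g x * nsq x) *v y" .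
qed

lemma MS_cong: "(\<And>x. x \<in> S \<Longrightarrow> f x = g x) \<Longrightarrow> MS S f = MS S g"
  unfolding MS_def by simp

lemma MS_one: "MS S (\<lambda>_. 1) = (\<Sum>x\<in>S. outer x)"
  unfolding MS_def by simp

lemma MS_adj: "cadjoint (MS S f) = MS S f"
  unfolding MS_def cadjoint_sum cadjoint_outer2
  by (rule sum.cong) (auto simp: outer2_def vec_eq_iff)

lemma MS_trace: "trace (MS S f) = (\<Sum>x\<in>S. of_real (f x * nsq x))"
  unfolding MS_def trace_sum trace_outer2 by (simp add: cinner_scale_right cinner_self)

lemma proj_unique:
  assumes "is_projection P" "is_projection Q" "range ((*v) P) = range ((*v) Q)"
  shows "P = Q"
proof -
  have PP: "P ** P = P" "cadjoint P = P" and QQ: "Q ** Q = Q" "cadjoint Q = Q"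
    using assms unfolding is_projection_def by auto
  have 1: "P ** Q = Q" unfolding matrix_eq
  proof
    fix y
    have "Q *v y \<in> range ((*v) P)" using assms(3) by auto
    then obtain z where "Q *v y = P *v z" by auto
    thus "(P ** Q) *v y = Q *v y"
      by (metis PP(1) matrix_vector_mul_assoc)
  qed
  have 2: "Q ** P = P" unfolding matrix_eq
  proof
    fix y
    have "P *v y \<in> range ((*v) Q)" using assms(3) by auto
    then obtain z where "P *v y = Q *v z" by auto
    thus "(Q ** P) *v y = P *v y"
      by (metis QQ(1) matrix_vector_mul_assoc)
  qed
  have "P = cadjoint (Q ** P)" using 2 PP by simp
  also have "\<dots> = P ** Q" by (simp add: cadjoint_mult PP QQ)
  finally show ?thesis using 1 by simp
qed

lemma range_proj_decomp:
  assumes "finite S" "orth S" "0 \<notin> S" "A = (\<Sum>x\<in>S. outer x)"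
  shows "range_projection A = MS S (\<lambda>x. 1 / nsq x)"
proof -
  let ?P = "MS S (\<lambda>x. 1 / nsq x)"
  have nz: "\<And>x. x \<in> S \<Longrightarrow> nsq x \<noteq> 0" using assms(3) nsq_eq_0 by metis
  have A: "A = MS S (\<lambda>_. 1)" using assms(4) by (simp add: MS_one)
  have PP: "?P ** ?P = ?P" unfolding MS_comp[OF assms(1,2)]
    by (rule MS_cong) (simp add: nz power2_eq_square)
  have PA: "?P ** A = A" unfolding A MS_comp[OF assms(1,2)]
    by (rule MS_cong) (simp add: nz)
  have AQ: "A ** MS S (\<lambda>x. 1 / (nsq x)^2) = ?P" unfolding A MS_comp[OF assms(1,2)]
    by (rule MS_cong) (simp add: nz power2_eq_square)
  have proj: "is_projection ?P" unfolding is_projection_def using PP MS_adj by auto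
  have rng: "range ((*v) ?P) = range ((*v) A)"
  proof
    show "range ((*v) ?P) \<subseteq> range ((*v) A)"
    proof
      fix v assume "v \<in> range ((*v) ?P)"
      then obtain y where "v = ?P *v y" by auto
      then have "v = A *v (MS S (\<lambda>x. 1 / (nsq x)^2) *v y)" by (simp add: matrix_vector_mul_assoc AQ)
      thus "v \<in> range ((*v) A)" by auto
    qed
    show "range ((*v) A) \<subseteq> range ((*v) ?P)"
    proof
      fix v assume "v \<in> range ((*v) A)"
      then obtain y where "v = A *v y" by auto
      then have "v = ?P *v (A *v y)" by (simp add: matrix_vector_mul_assoc PA)
      thus "v \<in> range ((*v) ?P)" by auto
    qed
  qed
  show ?thesis unfolding range_projection_def
    apply (rule the_equality)
    using proj rng apply simp
    by (metis proj rng proj_unique)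
qed



definition q :: "complex^'n^'n \<Rightarrow> complex^'n \<Rightarrow> real" where
  "q M y = Re (cinner y (M *v y))"

lemma herm_swap: "cadjoint C = C \<Longrightarrow> cinner (C *v x) y = cinner x (C *v y)"
  using cinner_adjoint[of C x y] by simp

lemma q_expand:
  assumes "cadjoint C = C"
  shows "q C (x + of_real t *s y) = q C x + 2 * t * Re (cinner y (C *v x)) + t^2 * q C y"
proof -
  have "cinner x (C *v y) = cnj (cinner y (C *v x))"
    using herm_swap[OF assms, of x y] cinner_commute[of "C *v x" y] by simp
  hence "Re (cinner x (C *v y)) = Re (cinner y (C *v x))" by simp
  thus ?thesis unfolding q_def
    by (simp add: matrix_vector_right_distrib mv_scale cinner_add_left cinner_add_right
        cinner_scale_left cinner_scale_right power2_eq_square algebra_simps)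
qed

lemma psd_zero:
  assumes "cadjoint C = C" "\<And>y. 0 \<le> q C y" "q C x = 0"
  shows "C *v x = 0"
proof -
  have r0: "Re (cinner y (C *v x)) = 0" for y
  proof (rule ccontr)
    define r where "r = Re (cinner y (C *v x))"
    define p where "p = q C y"
    assume "r \<noteq> 0"
    define t where "t = - r / (p + 1)"
    have p0: "0 \<le> p" using assms(2) p_def by simp
    have "0 \<le> q C (x + of_real t *s y)" by (rule assms(2))
    also have "\<dots> = 2 * t * r + t^2 * p" using q_expand[OF assms(1)] assms(3) r_def p_def by simp
    also have "\<dots> = - (t^2) * (p + 2)"
    proof -
      have "p + 1 \<noteq> 0" using p0 by simp
      then have td: "r = - t * (p + 1)" unfolding t_def by (simp add: field_simps)
      show ?thesis unfolding td by (simp add: power2_eq_square algebra_simps)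
    qed
    also have "\<dots> < 0"
    proof -
      have "t \<noteq> 0" unfolding t_def using \<open>r \<noteq> 0\<close> p0 by simp
      then have "0 < t^2" by simp
      thus ?thesis using p0 by (simp add: mult_pos_pos)
    qed
    finally show False by simp
  qed
  have "nsq (C *v x) = 0"
    using r0[of "C *v x"] unfolding nsq_def .
  thus ?thesis using nsq_eq_0 by blast
qed

lemma nsq_norm: "nsq y = (norm y)^2"
  by (simp add: nsq_def inner_cinner[symmetric] power2_norm_eq_inner)

lemma q_scale: "q M (of_real r *s y) = r^2 * q M y"
  unfolding q_def by (simp add: mv_scale cinner_scale_left cinner_scale_right power2_eq_square)

lemma q_cont: "continuous_on X (q M)"
  unfolding q_def cinner_def matrix_vector_mult_def
  by (auto intro!: continuous_intros)



definition good :: "complex^'n^'n \<Rightarrow> (complex^'n) set \<Rightarrow> bool" where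
  "good A S \<longleftrightarrow> finite S \<and> 0 \<notin> S \<and> orth S \<and> (\<forall>x\<in>S. A *v x = of_real (nsq x) *s x)"

lemma good_bound: "good A (S::(complex^'n) set) \<Longrightarrow> card S \<le> DIM(complex^'n)"
proof -
  assume g: "good A S"
  have "pairwise orthogonal S"
    using g unfolding good_def orth_def pairwise_def orthogonal_def inner_cinner by auto
  then have "independent S" using g pairwise_orthogonal_independent unfolding good_def by blast
  from independent_bound[OF this] show ?thesis by simp
qed

lemma exists_max: "\<exists>S. good A S \<and> (\<forall>T. good A T \<longrightarrow> card T \<le> card S)"
proof -
  let ?K = "card ` {S. good A S}"
  have fin: "finite ?K"
    by (rule finite_subset[of _ "{..DIM(complex^'n)}"]) (auto dest: good_bound)
  have "{} \<in> {S. good A S}" by (simp add: good_def orth_def)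
  then have ne: "?K \<noteq> {}" by blast
  have "Max ?K \<in> ?K" using fin ne by (rule Max_in)
  then obtain S where S: "good A S" "card S = Max ?K" by auto
  show ?thesis using S fin by (intro exI[of _ S]) auto
qed

lemma norm_nsq1: "norm y = 1 \<longleftrightarrow> nsq y = 1"
proof -
  have "norm y \<noteq> -1" using norm_ge_zero[of y] by linarith
  thus ?thesis unfolding nsq_norm by (auto simp: power2_eq_1_iff)
qed

lemma orth_pick_vec:
  assumes "finite S" "orth S" "s \<in> S"
  shows "(\<Sum>x\<in>S. cinner x s *s x) = cinner s s *s s"
proof -
  have "(\<Sum>x\<in>S. cinner x s *s x) = cinner s s *s s + (\<Sum>x\<in>S-{s}. cinner x s *s x)"
    using assms by (simp add: sum.remove)
  also have "(\<Sum>x\<in>S-{s}. cinner x s *s x) = 0"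
    using assms by (intro sum.neutral) (auto simp: orth_def vec_eq_iff)
  finally show ?thesis by simp
qed

lemma zero_mv: "(0::complex^'n^'n) *v y = 0"
  unfolding matrix_vector_mult_def by (simp add: vec_eq_iff)

lemma extend:
  assumes pos: "positive_op A" and g: "good A S" and Bdef: "B = A - (\<Sum>x\<in>S. outer x)" and B0: "B \<noteq> 0"
  shows "\<exists>z. good A (insert z S) \<and> z \<notin> S"
proof -
  have fS: "finite S" and nS: "0 \<notin> S" and oS: "orth S" and eS: "\<And>x. x \<in> S \<Longrightarrow> A *v x = of_real (nsq x) *s x"
    using g unfolding good_def by auto
  have hA: "cadjoint A = A" and posA: "\<And>y. 0 \<le> q A y"
    using pos unfolding positive_op_def q_def by auto
  have hB: "cadjoint B = B"
    unfolding Bdef cadjoint_diff cadjoint_sum cadjoint_outer2 hA ..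
  have Bv: "B *v y = A *v y - (\<Sum>x\<in>S. cinner x y *s x)" for y
    unfolding Bdef mv_diff_left sum_mult_vec outer2_mult_vec ..
  have Bx0: "B *v x = 0" if "x \<in> S" for x
    unfolding Bv orth_pick_vec[OF fS oS that] eS[OF that] by (simp add: cinner_self)
  have psdB: "0 \<le> q B y" for y
  proof -
    define c where "c x = of_real (1 / nsq x) * cinner x y" for x
    define w where "w = y - (\<Sum>x\<in>S. c x *s x)"
    have wo: "cinner s w = 0" if s: "s \<in> S" for s
    proof -
      have "cinner s w = cinner s y - (\<Sum>x\<in>S. c x * cinner s x)"
        unfolding w_def by (simp add: cinner_diff_right cinner_sum_right cinner_scale_right)
      also have "(\<Sum>x\<in>S. c x * cinner s x) = c s * cinner s s" by (rule orth_pick[OF fS oS s])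
      also have "c s * cinner s s = cinner s y"
        using nS s nsq_eq_0[of s] by (simp add: c_def cinner_self)
      finally show ?thesis by simp
    qed
    have wo': "cinner s w = 0" if "s \<in> S" for s using wo that .
    have "B *v w = B *v y - (\<Sum>x\<in>S. c x *s (B *v x))"
      unfolding w_def mv_diff_right mv_sum mv_scale ..
    also have "(\<Sum>x\<in>S. c x *s (B *v x)) = 0" using Bx0 by (simp add: vec_eq_iff)
    finally have BwBy: "B *v w = B *v y" by simp
    have BwAw: "B *v w = A *v w" unfolding Bv using wo' by (simp add: vec_eq_iff)
    have "q B y = Re (cinner y (B *v w))" unfolding q_def BwBy ..
    also have "\<dots> = Re (cinner (B *v y) w)" using herm_swap[OF hB, of y w] by simp
    also have "\<dots> = Re (cinner (B *v w) w)" by (simp add: BwBy)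
    also have "\<dots> = Re (cinner w (B *v w))" by (simp add: herm_swap[OF hB])
    also have "\<dots> = Re (cinner w (A *v w))" by (simp add: BwAw)
    finally show ?thesis using posA[of w] unfolding q_def by simp
  qed
  have "\<exists>y. 0 < q B y"
  proof (rule ccontr)
    assume "\<not> ?thesis"
    then have "q B y = 0" for y using psdB[of y] by (meson not_less order_antisym)
    then have "B *v y = 0 *v y" for y using psd_zero[OF hB psdB] zero_mv by metis
    then have "B = 0" using matrix_eq by blast
    thus False using B0 by simp
  qed
  then obtain y0 where y0: "0 < q B y0" by blast
  have y00: "y0 \<noteq> 0" using y0 unfolding q_def by auto
  have unit_scale: "nsq (of_real (1 / sqrt (nsq y)) *s y) = 1" if "y \<noteq> 0" for y
    unfolding nsq_scale using nsq_pos[OF that] by (simp add: power_divide)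
  have "sphere (0::complex^'n) 1 \<noteq> {}"
    using unit_scale[OF y00] by (auto simp: norm_nsq1)
  then obtain z where z: "z \<in> sphere 0 1" and zmax: "\<And>y. y \<in> sphere 0 1 \<Longrightarrow> q B y \<le> q B z"
    using continuous_attains_sup[OF compact_sphere _ q_cont] by blast
  have nz: "nsq z = 1" using z by (simp add: norm_nsq1)
  define mu where "mu = q B z"
  have bound: "q B y \<le> mu * nsq y" for y
  proof (cases "y = 0")
    case True thus ?thesis by (simp add: q_def nsq_def)
  next
    case False
    define r where "r = 1 / sqrt (nsq y)"
    have "of_real r *s y \<in> sphere 0 1" using unit_scale[OF False] by (simp add: r_def norm_nsq1)
    then have "r^2 * q B y \<le> mu" using zmax q_scale mu_def by metis
    moreover have "r^2 = 1 / nsq y" using nsq_pos[OF False] by (simp add: r_def power_divide)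
    ultimately show ?thesis using nsq_pos[OF False] by (simp add: field_simps)
  qed
  have mupos: "0 < mu"
  proof -
    have "q B y0 \<le> mu * nsq y0" by (rule bound)
    then have "0 < mu * nsq y0" using y0 by linarith
    thus ?thesis using nsq_pos[OF y00] by (simp add: zero_less_mult_iff)
  qed
  define C where "C = mat (of_real mu) - B"
  have hC: "cadjoint C = C" unfolding C_def cadjoint_diff cadjoint_mat hB by simp
  have qC: "q C y = mu * nsq y - q B y" for y
    unfolding C_def q_def mv_diff_left mv_mat by (simp add: cinner_diff_right cinner_scale_right cinner_self)
  have "C *v z = 0" by (rule psd_zero[OF hC]) (use bound qC nz mu_def in auto)
  then have Bz: "B *v z = of_real mu *s z" unfolding C_def mv_diff_left mv_mat by simp
  have zorth: "cinner x z = 0" if x: "x \<in> S" for x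
  proof -
    have "0 = cinner (B *v x) z" using Bx0[OF x] by simp
    also have "\<dots> = cinner x (B *v z)" by (rule herm_swap[OF hB])
    also have "\<dots> = of_real mu * cinner x z" unfolding Bz cinner_scale_right ..
    finally show ?thesis using mupos by simp
  qed
  have Az: "A *v z = of_real mu *s z"
    using Bv[of z] zorth Bz by (simp add: vec_eq_iff)
  define z' where "z' = of_real (sqrt mu) *s z"
  have nz': "nsq z' = mu" unfolding z'_def nsq_scale nz using mupos by simp
  have z'0: "z' \<noteq> 0" using nz' mupos nsq_eq_0[of z'] by auto
  have Az': "A *v z' = of_real (nsq z') *s z'"
  proof -
    have "A *v z' = of_real mu *s z'" unfolding z'_def mv_scale Az by (simp add: vec_eq_iff mult_ac)
    thus ?thesis using nz' by simp
  qed
  have z'orth: "\<forall>s\<in>S. cinner z' s = 0"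
  proof
    fix s assume "s \<in> S"
    then have "cinner z s = 0" using zorth[of s] cinner_commute[of s z] by simp
    thus "cinner z' s = 0" unfolding z'_def by (simp add: cinner_scale_left)
  qed
  note ins = orth_insert[OF oS z'0 z'orth]
  have "good A (insert z' S)"
    unfolding good_def using fS nS z'0 ins(1) Az' eS by auto
  thus ?thesis using ins(2) by blast
qed

lemma spectral:
  assumes "positive_op A"
  shows "\<exists>S. finite S \<and> 0 \<notin> S \<and> orth S \<and> A = (\<Sum>x\<in>S. outer x)"
proof -
  obtain S where S: "good A S" "\<And>T. good A T \<Longrightarrow> card T \<le> card S" using exists_max by blast
  have "A - (\<Sum>x\<in>S. outer x) = 0"
  proof (rule ccontr)
    assume "A - (\<Sum>x\<in>S. outer x) \<noteq> 0"
    then obtain z where "good A (insert z S)" "z \<notin> S" using extend[OF assms S(1)] by blast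
    moreover have "finite S" using S(1) good_def by blast
    ultimately show False using S(2) by fastforce
  qed
  thus ?thesis using S(1) unfolding good_def by auto
qed


theorem theorem5p1:
  fixes A :: "complex^'n^'n"
  assumes "positive_op A"
    and "\<exists>k::nat. trace A = of_nat k"
    and "Re (trace (range_projection A)) \<le> Re (trace A)"
  shows "\<exists>Ps :: (complex^'n^'n) list. (\<forall>P\<in>set Ps. is_projection P) \<and> A = sum_list Ps"
proof -
  obtain S where S: "finite S" "0 \<notin> S" "orth S" "A = (\<Sum>x\<in>S. outer x)"
    using spectral[OF assms(1)] by blast
  obtain k where k: "trace A = of_nat k" using assms(2) by blast
  have trA: "trace A = of_real (\<Sum>x\<in>S. nsq x)"
    unfolding S(4) trace_sum trace_outer2 by (simp add: cinner_self)
  have sumk: "(\<Sum>x\<in>S. nsq x) = real k"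
  proof -
    have "complex_of_real (\<Sum>x\<in>S. nsq x) = complex_of_real (real k)" using trA k by simp
    thus ?thesis using of_real_eq_iff by blast
  qed
  have rp: "range_projection A = MS S (\<lambda>x. 1 / nsq x)"
    by (rule range_proj_decomp[OF S(1,3,2,4)])
  have "trace (range_projection A) = (\<Sum>x\<in>S. 1)"
    unfolding rp MS_trace
  proof (rule sum.cong[OF refl])
    fix x assume "x \<in> S"
    then have "nsq x \<noteq> 0" using S(2) nsq_eq_0 by metis
    thus "complex_of_real (1 / nsq x * nsq x) = 1" by simp
  qed
  then have "trace (range_projection A) = of_nat (card S)" by simp
  then have "real (card S) \<le> real k" using assms(3) k by simp
  then have "card S \<le> k" by simp
  from comb[OF S(1,2,3) sumk this] show ?thesis using S(4) by simp
qed

end
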